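(* $B_4(n,d,w)$ equals the supremum of $\sum_{v\in F}x(\{v\})$ over all $x:\mathcal{C}_4\to\mathbb{R}$ with $x(\emptyset)=1$, $x(S)=0$ whenever $d_{\min}(S)<d$, $M_{3,D}(x)$ positive semidefinite for every $D\in\mathcal{C}_3$ with $|D|\le 1$, and $M_{4,D}(x)$ positive semidefinite for every $D\in\mathcal{C}_4$ with $|D|\in\{2,4\}$. Moreover, in both this program and the programs defining $A_4(n,d,w)$ and $B_4(n,d,w)$, every feasible $x$ satisfies $x(S)\ge 0$ for all $S\in\mathcal{C}_4$.
   Context: Notation: for a code $S\subseteq\{0,1\}^n$, $d_{\min}(S)$ is the minimum Hamming distance between distinct words of $S$ ($+\infty$ if $|S|\le 1$). Let $F\subseteq\{0,1\}^n$ be the set of words of weight $w$. $\mathcal{C}_k$ is the set of codes $C\subseteq F$ with $|C|\le k$. For $j\le k$ and $D\in\mathcal{C}_j$, $\mathcal{C}_j(D):=\{C\in\mathcal{C}_j : C\supseteq D,\ |D|+2|C\setminus D|\le j\}$. For $x:\mathcal{C}_k\to\mathbb{R}$, $M_{j,D}(x)$ is the $\mathcal{C}_j(D)\times\mathcal{C}_j(D)$ matrix with entries $x(C\cup C')$. $A_4(n,d,w)$ is the supremum of $\sum_{v\in F}x(\{v\})$ over all $x:\mathcal{C}_4\to\mathbb{R}$ with $x(\emptyset)=1$, $x(S)=0$ whenever $d_{\min}(S)<d$, and $M_{4,D}(x)$ positive semidefinite for every $D\in\mathcal{C}_4$. $B_4(n,d,w)$ is the supremum of $\sum_{v\in F}x(\{v\})$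 over all $x:\mathcal{C}_4\to\mathbb{R}$ with $x(\emptyset)=1$, $x(S)=0$ whenever $d_{\min}(S)<d$, $M_{3,D}(x)$ positive semidefinite for every $D\in\mathcal{C}_3$ with $|D|<2$, and $M_{4,D}(x)$ positive semidefinite for every $D\in\mathcal{C}_4$ with $|D|\ge 2$. *)

theory Defs
  imports Complex_Main "HOL-Library.Extended_Nat" "HOL-Library.Extended_Real"
begin

text \<open>A binary word of length n is encoded by its support, a subset of {0..<n}.
  Hamming distance = cardinality of the symmetric difference; weight = cardinality.\<close>

type_synonym word = "nat set"
type_synonym code = "nat set set"

definition hamming :: "word \<Rightarrow> word \<Rightarrow> nat" where
  "hamming u v = card ((u - v) \<union> (v - u))"

text \<open>Minimum distance; Inf of the empty set of enat is infinity.\<close>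
definition dmin :: "code \<Rightarrow> enat" where
  "dmin S = (INF p \<in> {(u, v). u \<in> S \<and> v \<in> S \<and> u \<noteq> v}. enat (hamming (fst p) (snd p)))"

definition Fw :: "nat \<Rightarrow> nat \<Rightarrow> word set" where
  "Fw n w = {v. v \<subseteq> {0..<n} \<and> card v = w}"

definition codes :: "nat \<Rightarrow> nat \<Rightarrow> nat \<Rightarrow> code set" where
  "codes n w k = {C. C \<subseteq> Fw n w \<and> card C \<le> k}"

definition codesD :: "nat \<Rightarrow> nat \<Rightarrow> nat \<Rightarrow> code \<Rightarrow> code set" where
  "codesD n w j D = {C \<in> codes n w j. D \<subseteq> C \<and> card D + 2 * card (C - D) \<le> j}"

definition psd_on :: "'i set \<Rightarrow> ('i \<Rightarrow> 'i \<Rightarrow> real) \<Rightarrow> bool" where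
  "psd_on I M \<longleftrightarrow> (\<forall>u :: 'i \<Rightarrow> real. 0 \<le> (\<Sum>i\<in>I. \<Sum>j\<in>I. u i * M i j * u j))"

definition moment_psd :: "nat \<Rightarrow> nat \<Rightarrow> (code \<Rightarrow> real) \<Rightarrow> nat \<Rightarrow> code \<Rightarrow> bool" where
  "moment_psd n w x j D \<longleftrightarrow> psd_on (codesD n w j D) (\<lambda>C C'. x (C \<union> C'))"

definition base_feasible :: "nat \<Rightarrow> nat \<Rightarrow> nat \<Rightarrow> (code \<Rightarrow> real) \<Rightarrow> bool" where
  "base_feasible n d w x \<longleftrightarrow> x {} = 1 \<and>
     (\<forall>S \<in> codes n w 4. dmin S < enat d \<longrightarrow> x S = 0)"

definition objective :: "nat \<Rightarrow> nat \<Rightarrow> (code \<Rightarrow> real) \<Rightarrow> real" where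
  "objective n w x = (\<Sum>v \<in> Fw n w. x {v})"

definition feasA :: "nat \<Rightarrow> nat \<Rightarrow> nat \<Rightarrow> (code \<Rightarrow> real) set" where
  "feasA n d w = {x. base_feasible n d w x \<and> (\<forall>D \<in> codes n w 4. moment_psd n w x 4 D)}"

definition feasB :: "nat \<Rightarrow> nat \<Rightarrow> nat \<Rightarrow> (code \<Rightarrow> real) set" where
  "feasB n d w = {x. base_feasible n d w x
     \<and> (\<forall>D \<in> codes n w 3. card D < 2 \<longrightarrow> moment_psd n w x 3 D)
     \<and> (\<forall>D \<in> codes n w 4. card D \<ge> 2 \<longrightarrow> moment_psd n w x 4 D)}"

definition feasB' :: "nat \<Rightarrow> nat \<Rightarrow> nat \<Rightarrow> (code \<Rightarrow> real) set" where
  "feasB' n d w = {x. base_feasible n d w x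
     \<and> (\<forall>D \<in> codes n w 3. card D \<le> 1 \<longrightarrow> moment_psd n w x 3 D)
     \<and> (\<forall>D \<in> codes n w 4. card D \<in> {2, 4} \<longrightarrow> moment_psd n w x 4 D)}"

text \<open>Suprema taken in the extended reals (so they are always defined).\<close>
definition A4 :: "nat \<Rightarrow> nat \<Rightarrow> nat \<Rightarrow> ereal" where
  "A4 n d w = Sup ((\<lambda>x. ereal (objective n w x)) ` feasA n d w)"

definition B4 :: "nat \<Rightarrow> nat \<Rightarrow> nat \<Rightarrow> ereal" where
  "B4 n d w = Sup ((\<lambda>x. ereal (objective n w x)) ` feasB n d w)"

end

theory Submission
  imports Defs
begin

lemma fin_Fw: "finite (Fw n w)"
  unfolding Fw_def by (rule finite_subset[of _ "Pow {0..<n}"]) auto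

lemma fin_codes_mem: "C \<in> codes n w k \<Longrightarrow> finite C"
  unfolding codes_def using fin_Fw finite_subset by blast

lemma fin_codesD: "finite (codesD n w j D)"
proof -
  have "codesD n w j D \<subseteq> Pow (Fw n w)" unfolding codesD_def codes_def by auto
  thus ?thesis using fin_Fw finite_subset by blast
qed

lemma psd_diag:
  assumes "finite I" "i \<in> I" "psd_on I M"
  shows "0 \<le> M i i"
proof -
  define u where "u = (\<lambda>j. if j = i then (1::real) else 0)"
  have "0 \<le> (\<Sum>a\<in>I. \<Sum>b\<in>I. u a * M a b * u b)" using assms(3) unfolding psd_on_def by blast
  also have "(\<Sum>a\<in>I. \<Sum>b\<in>I. u a * M a b * u b) = (\<Sum>a\<in>I. if a = i then M i i else 0)"
    by (rule sum.cong) (auto simp: u_def assms if_distrib cong: if_cong)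
  also have "\<dots> = M i i" using assms by simp
  finally show ?thesis .
qed

lemma diag_x:
  assumes "moment_psd n w x j D" "C \<in> codesD n w j D"
  shows "0 \<le> x C"
proof -
  have "psd_on (codesD n w j D) (\<lambda>C C'. x (C \<union> C'))" using assms(1) unfolding moment_psd_def .
  from psd_diag[OF fin_codesD assms(2) this] show ?thesis by simp
qed

lemma self_in_codesD:
  assumes "S \<in> codes n w k" "card S \<le> j" "card S \<le> k" "card S \<le> j"
  shows "S \<in> codesD n w j S"
  using assms unfolding codesD_def codes_def by auto

lemma codes_mono: "S \<in> codes n w k \<Longrightarrow> card S \<le> j \<Longrightarrow> S \<in> codes n w j"
  unfolding codes_def by auto

lemma three_case:
  assumes S: "S \<in> codes n w 4" "card S = 3"
  obtains D where "D \<in> codes n w 4" "card D = 2" "S \<in> codesD n w 4 D"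
proof -
  have fS: "finite S" using fin_codes_mem[OF S(1)] .
  obtain D where D: "D \<subseteq> S" "card D = 2"
    using obtain_subset_with_card_n[of 2 S] S(2) by auto
  have fD: "finite D" using D fS finite_subset by blast
  have "card (S - D) = 1" using card_Diff_subset[OF fD D(1)] D S(2) by simp
  hence "S \<in> codesD n w 4 D" using S D unfolding codesD_def by auto
  moreover have "D \<in> codes n w 4" using S(1) D unfolding codes_def by auto
  ultimately show ?thesis using that D by blast
qed

lemma feasB'_nonneg:
  assumes "x \<in> feasB' n d w" "S \<in> codes n w 4"
  shows "0 \<le> x S"
proof -
  have c4: "card S \<le> 4" using assms(2) unfolding codes_def by auto
  have h3: "\<And>D. D \<in> codes n w 3 \<Longrightarrow> card D \<le> 1 \<Longrightarrow> moment_psd n w x 3 D"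
   and h4: "\<And>D. D \<in> codes n w 4 \<Longrightarrow> card D \<in> {2,4} \<Longrightarrow> moment_psd n w x 4 D"
    using assms(1) unfolding feasB'_def by auto
  consider "card S \<le> 1" | "card S = 2 \<or> card S = 4" | "card S = 3" using c4 by linarith
  thus ?thesis
  proof cases
    case 1
    have S3: "S \<in> codes n w 3" using codes_mono[OF assms(2)] 1 by simp
    show ?thesis using diag_x[OF h3[OF S3 1] self_in_codesD[OF S3]] 1 by simp
  next
    case 2
    show ?thesis using diag_x[OF h4[OF assms(2)] self_in_codesD[OF assms(2)]] 2 by auto
  next
    case 3
    then obtain D where "D \<in> codes n w 4" "card D = 2" "S \<in> codesD n w 4 D"
      using three_case[OF assms(2)] by blast
    thus ?thesis using diag_x[of n w x 4 D S] h4[of D] by auto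
  qed
qed

lemma feasB_nonneg:
  assumes "x \<in> feasB n d w" "S \<in> codes n w 4"
  shows "0 \<le> x S"
proof -
  have c4: "card S \<le> 4" using assms(2) unfolding codes_def by auto
  have h3: "\<And>D. D \<in> codes n w 3 \<Longrightarrow> card D < 2 \<Longrightarrow> moment_psd n w x 3 D"
   and h4: "\<And>D. D \<in> codes n w 4 \<Longrightarrow> card D \<ge> 2 \<Longrightarrow> moment_psd n w x 4 D"
    using assms(1) unfolding feasB_def by auto
  show ?thesis
  proof (cases "card S < 2")
    case True
    have S3: "S \<in> codes n w 3" using codes_mono[OF assms(2)] True by simp
    show ?thesis using diag_x[OF h3[OF S3 True] self_in_codesD[OF S3]] True by simp
  next
    case False
    show ?thesis using diag_x[OF h4[OF assms(2)] self_in_codesD[OF assms(2)]] False c4 by auto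
  qed
qed

lemma feasA_nonneg:
  assumes "x \<in> feasA n d w" "S \<in> codes n w 4"
  shows "0 \<le> x S"
proof -
  have c4: "card S \<le> 4" using assms(2) unfolding codes_def by auto
  have "moment_psd n w x 4 S" using assms unfolding feasA_def by auto
  thus ?thesis using diag_x self_in_codesD[OF assms(2)] c4 by auto
qed

lemma codesD_three:
  assumes "D \<in> codes n w 4" "card D = 3"
  shows "codesD n w 4 D = {D}"
proof
  show "{D} \<subseteq> codesD n w 4 D" using assms unfolding codesD_def by auto
next
  show "codesD n w 4 D \<subseteq> {D}"
  proof
    fix C assume C: "C \<in> codesD n w 4 D"
    hence "D \<subseteq> C" "card (C - D) = 0" "finite C" using assms
      unfolding codesD_def by (auto intro: fin_codes_mem)
    hence "C = D" by auto
    thus "C \<in> {D}" by simp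
  qed
qed

lemma feasB'_sub: "feasB' n d w \<subseteq> feasB n d w"
proof
  fix x assume x: "x \<in> feasB' n d w"
  have h4: "\<And>D. D \<in> codes n w 4 \<Longrightarrow> card D \<in> {2,4} \<Longrightarrow> moment_psd n w x 4 D"
    using x unfolding feasB'_def by auto
  have "moment_psd n w x 4 D" if D: "D \<in> codes n w 4" "card D \<ge> 2" for D
  proof -
    have "card D \<le> 4" using D unfolding codes_def by auto
    hence "card D \<in> {2,4} \<or> card D = 3" using D by auto
    thus ?thesis
    proof
      assume "card D = 3"
      hence "codesD n w 4 D = {D}" using codesD_three D by blast
      moreover have "0 \<le> x D" using feasB'_nonneg[OF x D(1)] .
      ultimately show ?thesis unfolding moment_psd_def psd_on_def
      proof (simp, intro allI)
        fix u :: "code \<Rightarrow> real"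
        have "u D * x D * u D = x D * (u D * u D)" by simp
        thus "0 \<le> u D * x D * u D" using \<open>0 \<le> x D\<close>
          by (metis mult_nonneg_nonneg zero_le_square)
      qed
    qed (use h4 D in auto)
  qed
  thus "x \<in> feasB n d w" using x unfolding feasB'_def feasB_def by auto
qed

lemma feasB_sub: "feasB n d w \<subseteq> feasB' n d w"
  unfolding feasB'_def feasB_def by auto

theorem mainTheorem6:
  fixes n d w :: nat
  shows "B4 n d w = Sup ((\<lambda>x. ereal (objective n w x)) ` feasB' n d w)
    \<and> (\<forall>x \<in> feasA n d w \<union> feasB n d w \<union> feasB' n d w.
         \<forall>S \<in> codes n w 4. 0 \<le> x S)"
proof
  have "feasB n d w = feasB' n d w" using feasB_sub feasB'_sub by blast
  thus "B4 n d w = Sup ((\<lambda>x. ereal (objective n w x)) ` feasB' n d w)"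
    unfolding B4_def by simp
next
  show "\<forall>x \<in> feasA n d w \<union> feasB n d w \<union> feasB' n d w. \<forall>S \<in> codes n w 4. 0 \<le> x S"
    using feasA_nonneg feasB_nonneg feasB'_nonneg by blast
qed

end
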